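(* Let $N\geq 1$ be an integer, $0<\epsilon<1$, and $0<\gamma\leq 1/2$. Let $x_0,\ldots,x_{N-1}$ be real numbers satisfying $|x_j - j/N|\leq \gamma/N$ for $0\leq j\leq N-1$, and let $\omega_0,\ldots,\omega_{N-1}\in[0,N]$. Consider the $N\times N$ matrix \[ A_{jk} = e^{-2\pi i (x_j-j/N)\omega_k}, \qquad 0\leq j,k\leq N-1. \] Then there exists a matrix $A_K$ of rank (at most) $K$ such that $\|A-A_K\|_{\max}\leq \epsilon$, where \[ K = \max\left\{3, \Big\lceil 5\gamma\, e^{W\left(\log(140/\epsilon)/(5\gamma)\right)}\Big\rceil\right\}, \] and $K = \mathcal{O}\left(\log(1/\epsilon)/\log\log(1/\epsilon)\right)$ as $\epsilon\to 0$.
   Context: $\|B\|_{\max}=\max_{j,k}|B_{jk}|$ denotes the absolute maximum entry of a matrix $B$. $W$ denotes the Lambert W function (principal branch), and $\lceil t\rceil$ is the smallest integer $\ge t$. *)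

theory Defs
  imports "HOL-Analysis.Analysis" "HOL-Library.Landau_Symbols" "Jordan_Normal_Form.DL_Rank"
begin

definition lambertW :: "real \<Rightarrow> real" where
  "lambertW x = (THE w. w \<ge> -1 \<and> w * exp w = x)"

definition Kbound :: "real \<Rightarrow> real \<Rightarrow> nat" where
  "Kbound \<gamma> \<epsilon> = max 3 (nat \<lceil>5 * \<gamma> * exp (lambertW (ln (140 / \<epsilon>) / (5 * \<gamma>)))\<rceil>)"

definition nudft_mat :: "nat \<Rightarrow> (nat \<Rightarrow> real) \<Rightarrow> (nat \<Rightarrow> real) \<Rightarrow> complex mat" where
  "nudft_mat N x \<omega> = mat N N (\<lambda>(j, k).
     exp (- (2 * of_real pi * \<i>) * of_real ((x j - real j / real N) * \<omega> k)))"

end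

theory Submission
  imports Defs "HOL-Real_Asymp.Real_Asymp"
begin

lemma rank_sum_rank1:
  fixes u v :: "nat \<Rightarrow> nat \<Rightarrow> complex"
  shows "vec_space.rank N (mat N N (\<lambda>(j,k). \<Sum>i<m. u i j * v i k)) \<le> m"
proof (induction m)
  case 0
  have "mat N N (\<lambda>(j,k). \<Sum>i<(0::nat). u i j * v i k) = 0\<^sub>m N N"
    by (rule eq_matI) auto
  then show ?case using vec_space.rank_0I by (metis le_refl)
next
  case (Suc m)
  have e: "mat N N (\<lambda>(j,k). \<Sum>i<Suc m. u i j * v i k) =
     mat N N (\<lambda>(j,k). \<Sum>i<m. u i j * v i k) + mat N N (\<lambda>(j,k). u m j * v m k)"
    by (rule eq_matI) auto
  have "vec_space.rank N (mat N N (\<lambda>(j,k). u m j * v m k)) \<le> 1"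
    by (rule vec_space.rank_le_1_product_entries[where f="u m" and g="v m" and nc=N]) auto
  moreover have "vec_space.rank N (mat N N (\<lambda>(j,k). \<Sum>i<Suc m. u i j * v i k)) \<le>
     vec_space.rank N (mat N N (\<lambda>(j,k). \<Sum>i<m. u i j * v i k)) + vec_space.rank N (mat N N (\<lambda>(j,k). u m j * v m k))"
    unfolding e by (rule vec_space.rank_subadditive[where nc=N]) auto
  ultimately show ?case using Suc by linarith
qed

lemma gen_rolle:
  fixes D :: "nat \<Rightarrow> real \<Rightarrow> real"
  assumes "\<And>m t. m < n \<Longrightarrow> (D m has_real_derivative D (Suc m) t) (at t)"
    and "finite Z" "card Z = Suc n" "\<And>z. z \<in> Z \<Longrightarrow> D 0 z = 0" "Z \<subseteq> {lo..hi}"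
  shows "\<exists>\<xi>\<in>{lo..hi}. D n \<xi> = 0"
  using assms
proof (induction n arbitrary: D Z)
  case 0
  then obtain z where "Z = {z}" by (metis One_nat_def card_1_singletonE)
  then show ?case using 0 by auto
next
  case (Suc n)
  define zs where "zs = sorted_list_of_set Z"
  have len: "length zs = Suc (Suc n)" using Suc.prems zs_def by simp
  have sw: "sorted_wrt (<) zs" unfolding zs_def by (rule strict_sorted_list_of_set)
  have mem: "\<And>i. i < length zs \<Longrightarrow> zs ! i \<in> Z"
    using Suc.prems(2) zs_def nth_mem set_sorted_list_of_set by metis
  have "\<forall>i\<in>{..<Suc n}. \<exists>z. zs ! i < z \<and> z < zs ! Suc i \<and> D 1 z = 0"
  proof
    fix i assume i: "i \<in> {..<Suc n}"
    have lt: "zs ! i < zs ! Suc i" using sw len i by (simp add: sorted_wrt_nth_less)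
    have eq: "D 0 (zs ! i) = D 0 (zs ! Suc i)" using Suc.prems(4) mem len i by simp
    have dv: "\<And>t. (D 0 has_real_derivative D 1 t) (at t)" using Suc.prems(1) by simp
    have "continuous_on {zs ! i..zs ! Suc i} (D 0)"
      by (meson DERIV_isCont continuous_at_imp_continuous_on dv)
    moreover have "\<And>x. D 0 differentiable (at x)" using dv real_differentiable_def by blast
    ultimately obtain z where z: "zs ! i < z" "z < zs ! Suc i" "DERIV (D 0) z :> 0"
      using Rolle[OF lt eq] by blast
    have "D 1 z = 0" using DERIV_unique[OF dv z(3)] .
    then show "\<exists>z. zs ! i < z \<and> z < zs ! Suc i \<and> D 1 z = 0" using z by blast
  qed
  then obtain \<xi> where xi: "\<And>i. i < Suc n \<Longrightarrow> zs ! i < \<xi> i \<and> \<xi> i < zs ! Suc i \<and> D 1 (\<xi> i) = 0"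
    by (metis lessThan_iff bchoice)
  have mono: "\<xi> i < \<xi> j" if "i < j" "j < Suc n" for i j
  proof -
    have "\<xi> i < zs ! Suc i" using xi that by simp
    also have "zs ! Suc i \<le> zs ! j"
    proof (cases "Suc i = j")
      case False
      then have "Suc i < j" using that by simp
      then show ?thesis using sorted_wrt_nth_less[OF sw, of "Suc i" j] len that by simp
    qed simp
    also have "\<dots> < \<xi> j" using xi that by simp
    finally show ?thesis .
  qed
  have inj: "inj_on \<xi> {..<Suc n}"
    by (metis inj_onI lessThan_iff linorder_neqE_nat mono order_less_irrefl)
  define Z' where "Z' = \<xi> ` {..<Suc n}"
  have cZ: "card Z' = Suc n" unfolding Z'_def using card_image[OF inj] by simp
  have sub: "Z' \<subseteq> {lo..hi}"
  proof
    fix z assume "z \<in> Z'"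
    then obtain i where i: "i < Suc n" "z = \<xi> i" unfolding Z'_def by auto
    have "zs ! i \<in> {lo..hi}" "zs ! Suc i \<in> {lo..hi}" using mem[of i] mem[of "Suc i"] len i Suc.prems(5) by (auto simp del: atLeastAtMost_iff)
    then show "z \<in> {lo..hi}" using xi[OF i(1)] i by auto
  qed
  have "\<exists>\<xi>\<in>{lo..hi}. D (Suc n) \<xi> = 0"
  proof (rule Suc.IH[of "\<lambda>m. D (Suc m)" Z'])
    show "\<And>z. z \<in> Z' \<Longrightarrow> D (Suc 0) z = 0" using xi unfolding Z'_def by auto
  qed (use Suc.prems(1) cZ sub Z'_def in auto)
  then show ?case by simp
qed


lemma higher_pderiv_small:
  fixes q :: "real poly"
  assumes "degree q < n"
  shows "(pderiv ^^ n) q = 0"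
proof (rule poly_eqI)
  fix k
  have "coeff q (k + n) = 0" using assms by (intro coeff_eq_0) simp
  then show "coeff ((pderiv ^^ n) q) k = coeff 0 k" by (simp add: coeff_higher_pderiv)
qed

lemma higher_pderiv_monic:
  fixes q :: "real poly"
  assumes "degree q = n" "coeff q n = 1"
  shows "(pderiv ^^ n) q = [:fact n:]"
proof (rule poly_eqI)
  fix k
  show "coeff ((pderiv ^^ n) q) k = coeff [:fact n:] k"
  proof (cases k)
    case 0
    then show ?thesis using assms by (simp add: coeff_higher_pderiv pochhammer_fact)
  next
    case (Suc k')
    have "coeff q (k + n) = 0" using assms Suc by (intro coeff_eq_0) simp
    then show ?thesis using Suc by (simp add: coeff_higher_pderiv)
  qed
qed

lemma interp_error:
  fixes F :: "nat \<Rightarrow> real \<Rightarrow> real" and t :: "nat \<Rightarrow> real" and p w :: "real poly"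
  assumes der: "\<And>m x. (F m has_real_derivative F (Suc m) x) (at x)"
    and bnd: "\<And>x. \<bar>F K x\<bar> \<le> M"
    and tin: "\<And>i. i < K \<Longrightarrow> t i \<in> {lo..hi}"
    and tinj: "inj_on t {..<K}"
    and wdeg: "degree w = K" and wlc: "coeff w K = 1"
    and wroot: "\<And>i. i < K \<Longrightarrow> poly w (t i) = 0"
    and pdeg: "degree p < K"
    and pint: "\<And>i. i < K \<Longrightarrow> poly p (t i) = F 0 (t i)"
    and x: "x \<in> {lo..hi}"
  shows "\<bar>F 0 x - poly p x\<bar> \<le> M / fact K * \<bar>poly w x\<bar>"
proof (cases "x \<in> t ` {..<K}")
  case True
  then obtain i where "i < K" "x = t i" by auto
  then show ?thesis using pint wroot by simp
next
  case False
  have w0: "w \<noteq> 0" using wlc by auto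
  have wx: "poly w x \<noteq> 0"
  proof
    assume "poly w x = 0"
    then have "insert x (t ` {..<K}) \<subseteq> {x. poly w x = 0}" using wroot by auto
    then have "card (insert x (t ` {..<K})) \<le> card {x. poly w x = 0}"
      by (intro card_mono poly_roots_finite w0)
    also have "\<dots> \<le> K" using card_poly_roots_bound[OF w0] wdeg by simp
    finally show False using False card_image[OF tinj] by simp
  qed
  define C where "C = (F 0 x - poly p x) / poly w x"
  define D where "D = (\<lambda>m y. F m y - poly ((pderiv ^^ m) p) y - C * poly ((pderiv ^^ m) w) y)"
  have dD: "(D m has_real_derivative D (Suc m) y) (at y)" if "m < K" for m y
    unfolding D_def by (auto intro!: derivative_eq_intros der)
  have Z: "finite (insert x (t ` {..<K}))" "card (insert x (t ` {..<K})) = Suc K"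
    using False card_image[OF tinj] by auto
  have Dz: "D 0 z = 0" if "z \<in> insert x (t ` {..<K})" for z
    using that wx pint wroot unfolding D_def C_def by auto
  have sub: "insert x (t ` {..<K}) \<subseteq> {lo..hi}" using x tin by auto
  obtain \<xi> where "D K \<xi> = 0" using gen_rolle[OF dD Z Dz sub] by blast
  then have "F K \<xi> = C * fact K"
    unfolding D_def by (simp add: higher_pderiv_small[OF pdeg] higher_pderiv_monic[OF wdeg wlc])
  then have C: "C = F K \<xi> / fact K" by simp
  have "F 0 x - poly p x = C * poly w x" unfolding C_def using wx by simp
  then have "\<bar>F 0 x - poly p x\<bar> = \<bar>F K \<xi>\<bar> / fact K * \<bar>poly w x\<bar>" by (simp add: C abs_mult)
  also have "\<dots> \<le> M / fact K * \<bar>poly w x\<bar>"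
    by (intro mult_right_mono divide_right_mono bnd) auto
  finally show ?thesis .
qed


fun cheb :: "nat \<Rightarrow> real poly" where
  "cheb 0 = 1"
| "cheb (Suc 0) = [:0, 1:]"
| "cheb (Suc (Suc n)) = [:0, 2:] * cheb (Suc n) - cheb n"

lemma cheb_cos: "poly (cheb n) (cos th) = cos (real n * th)"
proof (induction n rule: cheb.induct)
  case (3 n)
  have "cos (real (Suc (Suc n)) * th) = cos ((real (Suc n)) * th + th)"
    by (simp add: algebra_simps)
  also have "\<dots> = 2 * cos th * cos (real (Suc n) * th) - cos ((real (Suc n)) * th - th)"
    by (simp add: cos_add cos_diff)
  also have "cos ((real (Suc n)) * th - th) = cos (real n * th)" by (simp add: algebra_simps)
  finally show ?case using 3 by simp
qed auto

lemma cheb_deg: "degree (cheb n) \<le> n"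
proof (induction n rule: cheb.induct)
  case (3 n)
  have "degree ([:0, 2:] * cheb (Suc n)) \<le> Suc (Suc n)"
    using degree_mult_le[of "[:0,2:]" "cheb (Suc n)"] 3 by simp
  moreover have "degree (cheb n) \<le> Suc (Suc n)" using 3 by simp
  ultimately show ?case by (simp add: degree_diff_le)
qed auto

lemma cheb_lc: "coeff (cheb (Suc n)) (Suc n) = 2 ^ n"
proof (induction n rule: nat_less_induct)
  case (1 n)
  show ?case
  proof (cases n)
    case (Suc m)
    have "coeff (cheb m) (Suc (Suc m)) = 0" using cheb_deg[of m] by (intro coeff_eq_0) simp
    then show ?thesis using 1 Suc by (simp add: mult_pCons_left)
  qed simp
qed

lemma cheb_bound: "\<bar>x\<bar> \<le> 1 \<Longrightarrow> \<bar>poly (cheb n) x\<bar> \<le> 1"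
  using cheb_cos[of n "arccos x"] by (simp add: cos_arccos_abs)

definition node :: "nat \<Rightarrow> nat \<Rightarrow> real" where
  "node K i = cos ((2 * real i + 1) * pi / (2 * real K))"

lemma node_root: "i < K \<Longrightarrow> poly (cheb K) (node K i) = 0"
proof -
  assume "i < K"
  then have "real K * ((2 * real i + 1) * pi / (2 * real K)) = real i * pi + pi / 2"
    by (simp add: field_simps)
  then show ?thesis unfolding node_def cheb_cos by (simp add: cos_add)
qed

lemma node_angle: "i < K \<Longrightarrow> 0 \<le> (2 * real i + 1) * pi / (2 * real K) \<and> (2 * real i + 1) * pi / (2 * real K) \<le> pi"
proof -
  assume i: "i < K"
  then have "2 * real i + 1 \<le> 2 * real K" by linarith
  then have "(2 * real i + 1) * pi \<le> 2 * real K * pi" by (simp add: mult_right_mono)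
  then show ?thesis using i by (simp add: divide_le_eq mult.commute)
qed

lemma node_inj: "inj_on (node K) {..<K}"
proof (rule inj_onI)
  fix i j assume "i \<in> {..<K}" "j \<in> {..<K}" "node K i = node K j"
  moreover have "0 \<le> (2 * real i + 1) * pi / (2 * real K) \<and> (2 * real i + 1) * pi / (2 * real K) \<le> pi"
    using node_angle \<open>i \<in> {..<K}\<close> by simp
  moreover have "0 \<le> (2 * real j + 1) * pi / (2 * real K) \<and> (2 * real j + 1) * pi / (2 * real K) \<le> pi"
    using node_angle \<open>j \<in> {..<K}\<close> by simp
  ultimately have "(2 * real i + 1) * pi / (2 * real K) = (2 * real j + 1) * pi / (2 * real K)"
    unfolding node_def using cos_inj_pi by blast
  then show "i = j" using \<open>i \<in> {..<K}\<close> by (auto simp: field_simps)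
qed

lemma node_in: "node K i \<in> {-1..1}"
  unfolding node_def by auto

definition lag :: "nat \<Rightarrow> nat \<Rightarrow> real poly" where
  "lag K i = Polynomial.smult (1 / (\<Prod>j\<in>{..<K} - {i}. (node K i - node K j))) (\<Prod>j\<in>{..<K} - {i}. [:- node K j, 1:])"

lemma lag_deg: "i < K \<Longrightarrow> degree (lag K i) < K"
proof -
  assume K: "i < K"
  have "degree (\<Prod>j\<in>{..<K} - {i}. [:- node K j, 1:]) \<le> (\<Sum>j\<in>{..<K} - {i}. degree [:- node K j, 1:])"
    using degree_prod_sum_le[of "{..<K} - {i}" "\<lambda>j. [:- node K j, 1:]"] by (simp add: o_def)
  also have "\<dots> = card ({..<K} - {i})" by simp
  also have "\<dots> < K" using K by simp
  finally show ?thesis unfolding lag_def using degree_smult_le le_less_trans by blast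
qed

lemma lag_node: "i < K \<Longrightarrow> k < K \<Longrightarrow> poly (lag K i) (node K k) = (if k = i then 1 else 0)"
proof -
  assume i: "i < K" and k: "k < K"
  show ?thesis
  proof (cases "k = i")
    case True
    have "(\<Prod>j\<in>{..<K} - {i}. (node K i - node K j)) \<noteq> 0"
      using node_inj[of K] i by (auto simp: inj_on_def)
    then show ?thesis using True by (simp add: lag_def poly_prod)
  next
    case False
    have "(\<Prod>j\<in>{..<K} - {i}. poly [:- node K j, 1:] (node K k)) = 0"
      using k False by (intro prod_zero) auto
    then show ?thesis using False by (simp add: lag_def poly_prod)
  qed
qed



lemma cheb_degree: "K \<ge> 1 \<Longrightarrow> degree (cheb K) = K"
proof -
  assume "K \<ge> 1"
  then obtain n where K: "K = Suc n" by (cases K) auto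
  have "coeff (cheb K) K \<noteq> 0" using cheb_lc[of n] K by simp
  then have "K \<le> degree (cheb K)" by (rule le_degree)
  then show ?thesis using cheb_deg[of K] by simp
qed

lemma cos_interp:
  fixes b \<phi> x :: real
  assumes K: "K \<ge> 1" and x: "x \<in> {-1..1}"
  shows "\<bar>cos (b * x + \<phi>) - (\<Sum>i<K. cos (b * node K i + \<phi>) * poly (lag K i) x)\<bar>
           \<le> \<bar>b\<bar> ^ K / fact K * (1 / 2 ^ (K - 1))"
proof -
  define F where "F = (\<lambda>m y. b ^ m * cos (b * y + \<phi> + real m * (pi / 2)))"
  have der: "(F m has_real_derivative F (Suc m) y) (at y)" for m y
  proof -
    have "(F m has_real_derivative b ^ m * (- sin (b * y + \<phi> + real m * (pi / 2)) * b)) (at y)"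
      unfolding F_def by (auto intro!: derivative_eq_intros)
    moreover have "b ^ m * (- sin (b * y + \<phi> + real m * (pi / 2)) * b) = F (Suc m) y"
    proof -
      have "b * y + \<phi> + real (Suc m) * (pi / 2) = (b * y + \<phi> + real m * (pi / 2)) + pi / 2"
        by (simp add: algebra_simps)
      then have "cos (b * y + \<phi> + real (Suc m) * (pi / 2)) = - sin (b * y + \<phi> + real m * (pi / 2))"
        by (simp only: cos_add cos_pi_half sin_pi_half)
      then show ?thesis unfolding F_def by simp
    qed
    ultimately show ?thesis by simp
  qed
  have bnd: "\<bar>F K y\<bar> \<le> \<bar>b\<bar> ^ K" for y
    unfolding F_def by (simp add: abs_mult power_abs mult_left_le)
  define p where "p = (\<Sum>i<K. Polynomial.smult (F 0 (node K i)) (lag K i))"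
  have pdeg: "degree p < K" unfolding p_def
    using K lag_deg by (intro degree_sum_less) (auto intro: le_less_trans[OF degree_smult_le])
  have pint: "poly p (node K k) = F 0 (node K k)" if k: "k < K" for k
  proof -
    have "poly p (node K k) = (\<Sum>i<K. F 0 (node K i) * (if k = i then 1 else 0))"
      unfolding p_def poly_sum using lag_node k by (simp add: lag_node)
    also have "\<dots> = (\<Sum>i<K. if k = i then F 0 (node K k) else 0)"
      by (intro sum.cong) auto
    also have "\<dots> = F 0 (node K k)" using k by (simp add: sum.delta)
    finally show ?thesis .
  qed
  define w where "w = Polynomial.smult (1 / 2 ^ (K - 1)) (cheb K)"
  obtain n where Kn: "K = Suc n" using K by (cases K) auto
  have wdeg: "degree w = K" unfolding w_def using cheb_degree[OF K] by simp
  have wlc: "coeff w K = 1" unfolding w_def using cheb_lc[of n] Kn by simp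
  have wroot: "poly w (node K i) = 0" if "i < K" for i
    unfolding w_def using node_root[OF that] by simp
  have "\<bar>F 0 x - poly p x\<bar> \<le> \<bar>b\<bar> ^ K / fact K * \<bar>poly w x\<bar>"
    by (rule interp_error[OF der bnd node_in node_inj wdeg wlc wroot pdeg pint x])
  also have "\<bar>poly w x\<bar> \<le> 1 / 2 ^ (K - 1)"
  proof -
    have "\<bar>x\<bar> \<le> 1" using x by auto
    then have "\<bar>poly (cheb K) x\<bar> \<le> 1" by (rule cheb_bound)
    then show ?thesis unfolding w_def by (simp add: abs_mult divide_le_cancel)
  qed
  then have "\<bar>b\<bar> ^ K / fact K * \<bar>poly w x\<bar> \<le> \<bar>b\<bar> ^ K / fact K * (1 / 2 ^ (K - 1))"
    by (intro mult_left_mono) auto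
  finally have *: "\<bar>F 0 x - poly p x\<bar> \<le> \<bar>b\<bar> ^ K / fact K * (1 / 2 ^ (K - 1))" .
  have "poly p x = (\<Sum>i<K. cos (b * node K i + \<phi>) * poly (lag K i) x)"
    unfolding p_def poly_sum F_def by simp
  moreover have "F 0 x = cos (b * x + \<phi>)" unfolding F_def by simp
  ultimately show ?thesis using * by simp
qed


lemma lambertW_pos:
  assumes y: "y > 0"
  shows "lambertW y > 0 \<and> lambertW y * exp (lambertW y) = y"
proof -
  have pos: "w > 0" if "w * exp w = y" for w :: real
  proof (rule ccontr)
    assume "\<not> w > 0"
    then have "w * exp w \<le> 0" by (simp add: mult_nonpos_nonneg)
    then show False using that y by simp
  qed
  have mono: "w1 * exp w1 < w2 * exp w2" if "0 < w1" "w1 < w2" for w1 w2 :: real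
    using mult_strict_mono[of w1 w2 "exp w1" "exp w2"] that by simp
  obtain w where w: "0 \<le> w" "w \<le> y" "w * exp w = y"
  proof -
    have "\<exists>w\<ge>0. w \<le> y \<and> w * exp w = y"
    proof (rule IVT)
      show "0 * exp 0 \<le> y" using y by simp
      show "y \<le> y * exp y" using y by simp
      show "0 \<le> y" using y by simp
      show "\<forall>x. 0 \<le> x \<and> x \<le> y \<longrightarrow> isCont (\<lambda>w. w * exp w) x" by (auto intro!: continuous_intros)
    qed
    then show ?thesis using that by blast
  qed
  have uniq: "\<exists>!w. w \<ge> -1 \<and> w * exp w = y"
  proof
    show "w \<ge> -1 \<and> w * exp w = y" using w by simp
    fix v assume v: "v \<ge> -1 \<and> v * exp v = y"
    show "v = w"
    proof (rule ccontr)
      assume "v \<noteq> w"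
      then consider "v < w" | "w < v" by linarith
      then show False
        using mono[of v w] mono[of w v] pos[of v] pos[of w] v w by (cases; auto)
    qed
  qed
  have "lambertW y \<ge> -1 \<and> lambertW y * exp (lambertW y) = y"
    unfolding lambertW_def by (rule theI'[OF uniq])
  then show ?thesis using pos by blast
qed

lemma eps_bound:
  assumes "0 < \<epsilon>" "\<epsilon> < 1" "0 < \<gamma>"
  shows "140 * (5 * \<gamma> / real (Kbound \<gamma> \<epsilon>)) ^ (Kbound \<gamma> \<epsilon>) \<le> \<epsilon>"
proof -
  define L where "L = ln (140 / \<epsilon>)"
  have L: "L > 0" unfolding L_def using assms by simp
  define w where "w = lambertW (L / (5 * \<gamma>))"
  have w: "w > 0" "w * exp w = L / (5 * \<gamma>)"
    using lambertW_pos[of "L / (5 * \<gamma>)"] L assms unfolding w_def by auto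
  define K where "K = Kbound \<gamma> \<epsilon>"
  have "real K \<ge> 5 * \<gamma> * exp w"
    unfolding K_def Kbound_def w_def L_def by linarith
  then have Kpos: "real K > 0" using assms by (smt (verit) exp_gt_zero mult_pos_pos)
  have e: "exp w \<le> real K / (5 * \<gamma>)" using \<open>real K \<ge> 5 * \<gamma> * exp w\<close> assms
    by (simp add: field_simps)
  then have lw: "w \<le> ln (real K / (5 * \<gamma>))"
    using assms Kpos by (metis exp_gt_zero ln_exp ln_mono order_less_le_trans)
  have "L = 5 * \<gamma> * (w * exp w)" using w assms by simp
  also have "\<dots> = w * (5 * \<gamma> * exp w)" by simp
  also have "\<dots> \<le> w * real K" using w \<open>real K \<ge> 5 * \<gamma> * exp w\<close> by (intro mult_left_mono) auto
  also have "\<dots> \<le> ln (real K / (5 * \<gamma>)) * real K" using lw Kpos by (intro mult_right_mono) auto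
  also have "\<dots> = ln ((real K / (5 * \<gamma>)) ^ K)" using Kpos assms by (simp add: ln_realpow)
  finally have "ln (140 / \<epsilon>) \<le> ln ((real K / (5 * \<gamma>)) ^ K)" unfolding L_def .
  then have "140 / \<epsilon> \<le> (real K / (5 * \<gamma>)) ^ K"
    using assms Kpos by (subst (asm) ln_le_cancel_iff) auto
  then have "140 \<le> \<epsilon> * (real K / (5 * \<gamma>)) ^ K" using assms by (simp add: field_simps)
  then have "140 / (real K / (5 * \<gamma>)) ^ K \<le> \<epsilon>"
    using assms Kpos by (simp add: divide_le_eq mult.commute)
  moreover have "140 / (real K / (5 * \<gamma>)) ^ K = 140 * (5 * \<gamma> / real K) ^ K"
    by (simp add: power_divide)
  ultimately show ?thesis unfolding K_def by simp
qed


lemma fact_exp_bound: "real K ^ K \<le> exp (real K) * fact K"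
proof -
  obtain t where t: "exp (real K) = (\<Sum>m<Suc K. (real K ^ m) / fact m) + (exp t / fact (Suc K)) * real K ^ Suc K"
    using Maclaurin_exp_le[of "real K" "Suc K"] by blast
  have "real K ^ K / fact K \<le> (\<Sum>m<Suc K. (real K ^ m) / fact m)"
    by (rule member_le_sum[of K "{..<Suc K}" "\<lambda>m. real K ^ m / fact m"]) auto
  also have "\<dots> \<le> exp (real K)" using t by simp
  finally show ?thesis by (simp add: divide_le_eq mult.commute)
qed

lemma numeric_bound:
  fixes \<gamma> :: real
  assumes "K \<ge> 1" "\<gamma> > 0"
  shows "4 * (pi * \<gamma> / 2) ^ K / fact K \<le> 140 * (5 * \<gamma> / real K) ^ K"
proof -
  have Kp: "real K > 0" using assms by simp
  have "(pi * \<gamma> / 2) ^ K / fact K \<le> (pi * \<gamma> / 2) ^ K * (exp (real K) / real K ^ K)"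
  proof -
    have "1 / fact K \<le> exp (real K) / real K ^ K"
      using fact_exp_bound[of K] Kp by (simp add: field_simps)
    moreover have "0 \<le> (pi * \<gamma> / 2) ^ K" using assms by simp
    ultimately have "(pi * \<gamma> / 2) ^ K * (1 / fact K) \<le> (pi * \<gamma> / 2) ^ K * (exp (real K) / real K ^ K)"
      by (rule mult_left_mono)
    then show ?thesis by simp
  qed
  also have "\<dots> = (pi * exp 1 * \<gamma> / (2 * real K)) ^ K"
    using exp_of_nat_mult[of K "1::real"] by (simp add: power_divide power_mult_distrib)
  also have "\<dots> \<le> (5 * \<gamma> / real K) ^ K"
  proof (rule power_mono)
    have "pi * exp 1 \<le> 10"
    proof -
      have "pi * exp 1 \<le> 3.1415926535899 * 2.72"
        using pi_approx e_less_272 by (intro mult_mono) auto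
      then show ?thesis by simp
    qed
    then have "pi * exp 1 * \<gamma> \<le> 10 * \<gamma>" using assms by (intro mult_right_mono) auto
    then show "pi * exp 1 * \<gamma> / (2 * real K) \<le> 5 * \<gamma> / real K"
      using Kp by (simp add: field_simps)
    show "0 \<le> pi * exp 1 * \<gamma> / (2 * real K)" using assms by simp
  qed
  finally have "(pi * \<gamma> / 2) ^ K / fact K \<le> (5 * \<gamma> / real K) ^ K" .
  moreover have "0 \<le> (5 * \<gamma> / real K) ^ K" using assms by simp
  ultimately show ?thesis by linarith
qed

lemma cexp_interp:
  fixes b x :: real
  assumes K: "K \<ge> 1" and x: "x \<in> {-1..1}"
  shows "cmod (exp (\<i> * of_real (b * x)) - (\<Sum>i<K. exp (\<i> * of_real (b * node K i)) * of_real (poly (lag K i) x)))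
           \<le> 2 * (\<bar>b\<bar> ^ K / fact K * (1 / 2 ^ (K - 1)))"
proof -
  define R where "R = cos (b * x) - (\<Sum>i<K. cos (b * node K i) * poly (lag K i) x)"
  define I where "I = sin (b * x) - (\<Sum>i<K. sin (b * node K i) * poly (lag K i) x)"
  have R: "\<bar>R\<bar> \<le> \<bar>b\<bar> ^ K / fact K * (1 / 2 ^ (K - 1))"
    using cos_interp[OF K x, of b 0] unfolding R_def by simp
  have sc: "cos (y + - (pi/2)) = sin y" for y by (simp only: cos_add cos_minus sin_minus cos_pi_half sin_pi_half)
  have I: "\<bar>I\<bar> \<le> \<bar>b\<bar> ^ K / fact K * (1 / 2 ^ (K - 1))"
    using cos_interp[OF K x, of b "- (pi/2)"] unfolding I_def sc .
  have ex: "exp (\<i> * complex_of_real y) = complex_of_real (cos y) + \<i> * complex_of_real (sin y)" for y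
    by (simp add: cis_conv_exp[symmetric] complex_eq_iff)
  have eqn: "exp (\<i> * of_real (b * x)) - (\<Sum>i<K. exp (\<i> * of_real (b * node K i)) * of_real (poly (lag K i) x))
      = complex_of_real R + \<i> * complex_of_real I" (is "?lhs = ?rhs")
    unfolding ex by (simp add: complex_eq_iff R_def I_def)
  then have "cmod (exp (\<i> * of_real (b * x)) - (\<Sum>i<K. exp (\<i> * of_real (b * node K i)) * of_real (poly (lag K i) x)))
      \<le> \<bar>R\<bar> + \<bar>I\<bar>"
  proof -
    have c: "cmod (complex_of_real R + \<i> * complex_of_real I) \<le> \<bar>R\<bar> + \<bar>I\<bar>"
      using cmod_le[of "complex_of_real R + \<i> * complex_of_real I"] by simp
    show ?thesis unfolding eqn by (rule c)
  qed
  then show ?thesis using R I by linarith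
qed



lemma ev1: "eventually (\<lambda>e::real. 2 < ln (ln (140 / e))) (at_right 0)"
  by real_asymp

lemma ev2: "eventually (\<lambda>e::real. e < 1) (at_right 0)"
  by real_asymp

lemma hO: "(\<lambda>e::real. 4 + 2 * ln (140 / e) / (ln (ln (140 / e)) - 1)) \<in> O[at_right 0](\<lambda>e. ln (1 / e) / ln (ln (1 / e)))"
  by real_asymp

lemma lambertW_lower:
  assumes y: "y > 1"
  shows "ln y / 2 \<le> lambertW y"
proof (rule ccontr)
  define w where "w = lambertW y"
  have w: "w > 0" "w * exp w = y" using lambertW_pos[of y] y unfolding w_def by auto
  assume "\<not> ln y / 2 \<le> lambertW y"
  then have lt: "w < ln y / 2" unfolding w_def by simp
  define z where "z = exp (ln y / 2)"
  have z2: "z * z = y" unfolding z_def using y by (simp add: exp_add[symmetric])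
  have z1: "z > 1" unfolding z_def using y by simp
  have "w * exp w < (ln y / 2) * exp (ln y / 2)"
    using mult_strict_mono[of w "ln y / 2" "exp w" "exp (ln y / 2)"] lt w by simp
  also have "\<dots> = z * ln z" unfolding z_def by simp
  also have "\<dots> \<le> z * (z - 1)" using z1 ln_le_minus_one[of z] by (intro mult_left_mono) auto
  also have "\<dots> < y" using z2 z1 by (simp add: algebra_simps)
  finally show False using w by simp
qed

lemma Kbound_le:
  assumes g: "0 < \<gamma>" "\<gamma> \<le> 1/2" and e: "0 < e" "e < 1" and ll: "2 < ln (ln (140 / e))"
  shows "real (Kbound \<gamma> e) \<le> 4 + 2 * ln (140 / e) / (ln (ln (140 / e)) - 1)"
proof -
  define L where "L = ln (140 / e)"
  have lL: "ln L > 2" using ll unfolding L_def .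
  have L0: "L > 0" unfolding L_def using e by simp
  have L: "L > exp 2" using lL L0 by (metis exp_less_cancel_iff exp_ln)
  have Lg: "L > 3" using L exp_ge_add_one_self[of 2] by simp
  define y where "y = L / (5 * \<gamma>)"
  have y1: "y > 1" unfolding y_def using g Lg by (simp add: field_simps)
  define w where "w = lambertW y"
  have w: "w > 0" "w * exp w = y" using lambertW_pos[of y] y1 unfolding w_def by auto
  have wl: "ln y / 2 \<le> w" unfolding w_def by (rule lambertW_lower[OF y1])
  have lny: "ln y \<ge> ln L - 1"
  proof -
    have "ln y = ln L - ln (5 * \<gamma>)" unfolding y_def using g Lg by (simp add: ln_div)
    moreover have "ln (5 * \<gamma>) \<le> 1"
    proof -
      have "5 * \<gamma> \<le> exp 1" using g exp_lower_Taylor_quadratic[of 1] by simp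
      then show ?thesis using g by (metis ln_exp ln_mono mult_pos_pos zero_less_numeral)
    qed
    ultimately show ?thesis by simp
  qed
  have a: "5 * \<gamma> * exp w = L / w"
    using w g unfolding y_def by (simp add: field_simps)
  have "L / w \<le> L / (ln y / 2)"
    using wl Lg lny lL by (intro divide_left_mono) auto
  also have "\<dots> = 2 * L / ln y" by simp
  also have "\<dots> \<le> 2 * L / (ln L - 1)"
    using lny lL Lg by (intro divide_left_mono) auto
  finally have b: "5 * \<gamma> * exp w \<le> 2 * L / (ln L - 1)" using a by simp
  have "0 \<le> 5 * \<gamma> * exp w" using g by simp
  then have "real (nat \<lceil>5 * \<gamma> * exp w\<rceil>) = of_int \<lceil>5 * \<gamma> * exp w\<rceil>" by simp
  also have "\<dots> \<le> 5 * \<gamma> * exp w + 1" by (rule of_int_ceiling_le_add_one)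
  finally have "real (nat \<lceil>5 * \<gamma> * exp w\<rceil>) \<le> 5 * \<gamma> * exp w + 1" .
  moreover have mx: "real (max 3 m) \<le> 3 + real m" for m :: nat by (simp add: max_def)
  have "real (Kbound \<gamma> e) \<le> 3 + real (nat \<lceil>5 * \<gamma> * exp w\<rceil>)"
    unfolding Kbound_def w_def y_def L_def by (rule mx)
  ultimately have "real (Kbound \<gamma> e) \<le> 3 + (5 * \<gamma> * exp w + 1)" by linarith
  then show ?thesis using b unfolding L_def by simp
qed

lemma bigO_part:
  assumes g: "0 < \<gamma>" "\<gamma> \<le> 1/2"
  shows "(\<lambda>e. real (Kbound \<gamma> e)) \<in> O[at_right 0](\<lambda>e. ln (1 / e) / ln (ln (1 / e)))"
proof (rule landau_o.big_trans[OF _ hO])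
  have "eventually (\<lambda>e::real. 0 < e \<and> e < 1 \<and> 2 < ln (ln (140 / e))) (at_right 0)"
    using ev1 ev2 eventually_at_right_less[of 0] by eventually_elim auto
  then show "(\<lambda>e. real (Kbound \<gamma> e)) \<in> O[at_right 0](\<lambda>e. 4 + 2 * ln (140 / e) / (ln (ln (140 / e)) - 1))"
  proof (intro landau_o.big_mono, elim eventually_mono)
    fix e :: real assume e: "0 < e \<and> e < 1 \<and> 2 < ln (ln (140 / e))"
    have h: "real (Kbound \<gamma> e) \<le> 4 + 2 * ln (140 / e) / (ln (ln (140 / e)) - 1)"
      using Kbound_le[OF g] e by blast
    then show "norm (real (Kbound \<gamma> e)) \<le> norm (4 + 2 * ln (140 / e) / (ln (ln (140 / e)) - 1))"
      by simp
  qed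
qed



lemma pw: "K \<ge> 1 \<Longrightarrow> 2 * (b ^ K / fact K * (1 / 2 ^ (K - 1))) = 4 * ((b::real) / 2) ^ K / fact K"
proof -
  assume "K \<ge> 1"
  then obtain n where K: "K = Suc n" by (cases K) auto
  show ?thesis unfolding K by (simp add: power_divide)
qed

lemma ph:
  fixes d b s :: real
  assumes "b + b * s = - (2 * pi * d)"
  shows "- (2 * of_real pi * \<i>) * complex_of_real d = \<i> * of_real b + \<i> * of_real (b * s)"
proof -
  have "\<i> * of_real b + \<i> * of_real (b * s) = \<i> * complex_of_real (b + b * s)" by (simp add: distrib_left)
  also have "\<dots> = \<i> * complex_of_real (- (2 * pi * d))" using assms by simp
  also have "\<dots> = - (2 * of_real pi * \<i>) * complex_of_real d" by simp
  finally show ?thesis by simp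
qed


lemma approx_part:
  fixes N :: nat and \<epsilon> \<gamma> :: real and x \<omega> :: "nat \<Rightarrow> real"
  assumes "N \<ge> 1" and "0 < \<epsilon>" and "\<epsilon> < 1" and "0 < \<gamma>" and "\<gamma> \<le> 1/2"
    and xb: "\<And>j. j < N \<Longrightarrow> \<bar>x j - real j / real N\<bar> \<le> \<gamma> / real N"
    and wb: "\<And>k. k < N \<Longrightarrow> \<omega> k \<in> {0..real N}"
  shows "\<exists>AK :: complex mat. AK \<in> carrier_mat N N \<and>
            vec_space.rank N AK \<le> Kbound \<gamma> \<epsilon> \<and>
            (\<forall>j<N. \<forall>k<N. cmod (nudft_mat N x \<omega> $$ (j, k) - AK $$ (j, k)) \<le> \<epsilon>)"
proof -
  define K where "K = Kbound \<gamma> \<epsilon>"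
  have K1: "K \<ge> 1" unfolding K_def Kbound_def by simp
  have Np: "real N > 0" using assms by simp
  define \<beta> where "\<beta> = (\<lambda>j. - (pi * (x j - real j / real N) * real N))"
  define s where "s = (\<lambda>k. 2 * \<omega> k / real N - 1)"
  define u where "u = (\<lambda>i j. exp (\<i> * of_real (\<beta> j)) * exp (\<i> * of_real (\<beta> j * node K i)))"
  define v where "v = (\<lambda>i k. complex_of_real (poly (lag K i) (s k)))"
  define AK where "AK = mat N N (\<lambda>(j,k). \<Sum>i<K. u i j * v i k)"
  have err: "cmod (nudft_mat N x \<omega> $$ (j, k) - AK $$ (j, k)) \<le> \<epsilon>" if j: "j < N" and k: "k < N" for j k
  proof -
    have sk: "s k \<in> {-1..1}" using wb[OF k] Np unfolding s_def by (auto simp: field_simps)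
    have bb: "\<bar>\<beta> j\<bar> \<le> pi * \<gamma>"
    proof -
      have "\<bar>\<beta> j\<bar> = pi * (\<bar>x j - real j / real N\<bar> * real N)" unfolding \<beta>_def by (simp add: abs_mult)
      also have "\<dots> \<le> pi * (\<gamma> / real N * real N)"
        using xb[OF j] Np by (intro mult_left_mono mult_right_mono) auto
      also have "\<dots> = pi * \<gamma>" using Np by simp
      finally show ?thesis .
    qed
    have r: "\<beta> j + \<beta> j * s k = - (2 * pi * ((x j - real j / real N) * \<omega> k))"
      unfolding \<beta>_def s_def using Np by (simp add: field_simps)
    have A0: "nudft_mat N x \<omega> $$ (j, k) = exp (- (2 * of_real pi * \<i>) * complex_of_real ((x j - real j / real N) * \<omega> k))"
      unfolding nudft_mat_def using j k by simp
    have A: "nudft_mat N x \<omega> $$ (j, k) = exp (\<i> * of_real (\<beta> j)) * exp (\<i> * of_real (\<beta> j * s k))"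
      by (simp only: A0 ph[OF r] exp_add)
    have B0: "AK $$ (j, k) = (\<Sum>i<K. u i j * v i k)"
      unfolding AK_def using j k by simp
    have B: "AK $$ (j, k) = exp (\<i> * of_real (\<beta> j)) *
         (\<Sum>i<K. exp (\<i> * of_real (\<beta> j * node K i)) * of_real (poly (lag K i) (s k)))"
      unfolding B0 u_def v_def by (simp only: sum_distrib_left mult.assoc)
    have "cmod (nudft_mat N x \<omega> $$ (j, k) - AK $$ (j, k)) =
       cmod (exp (\<i> * of_real (\<beta> j * s k)) - (\<Sum>i<K. exp (\<i> * of_real (\<beta> j * node K i)) * of_real (poly (lag K i) (s k))))"
      by (simp only: A B right_diff_distrib[symmetric] norm_mult norm_exp_i_times mult_1)
    also have "\<dots> \<le> 2 * (\<bar>\<beta> j\<bar> ^ K / fact K * (1 / 2 ^ (K - 1)))"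
      by (rule cexp_interp[OF K1 sk])
    also have "\<dots> = 4 * (\<bar>\<beta> j\<bar> / 2) ^ K / fact K"
      by (rule pw[OF K1])
    also have "\<dots> \<le> 4 * (pi * \<gamma> / 2) ^ K / fact K"
      using bb by (intro divide_right_mono mult_left_mono power_mono) auto
    also have "\<dots> \<le> 140 * (5 * \<gamma> / real K) ^ K" by (rule numeric_bound[OF K1 assms(4)])
    also have "\<dots> \<le> \<epsilon>" unfolding K_def by (rule eps_bound[OF assms(2,3,4)])
    finally show ?thesis .
  qed
  have "AK \<in> carrier_mat N N" unfolding AK_def by simp
  moreover have "vec_space.rank N AK \<le> K" unfolding AK_def by (rule rank_sum_rank1)
  ultimately show ?thesis using err unfolding K_def by blast
qed


theorem theoremA2:
  fixes N :: nat and \<epsilon> \<gamma> :: real and x \<omega> :: "nat \<Rightarrow> real"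
  assumes "N \<ge> 1" and "0 < \<epsilon>" and "\<epsilon> < 1" and "0 < \<gamma>" and "\<gamma> \<le> 1/2"
    and "\<And>j. j < N \<Longrightarrow> \<bar>x j - real j / real N\<bar> \<le> \<gamma> / real N"
    and "\<And>k. k < N \<Longrightarrow> \<omega> k \<in> {0..real N}"
  shows "(\<exists>AK :: complex mat. AK \<in> carrier_mat N N \<and>
            vec_space.rank N AK \<le> Kbound \<gamma> \<epsilon> \<and>
            (\<forall>j<N. \<forall>k<N. cmod (nudft_mat N x \<omega> $$ (j, k) - AK $$ (j, k)) \<le> \<epsilon>))
         \<and> (\<lambda>e. real (Kbound \<gamma> e)) \<in> O[at_right 0](\<lambda>e. ln (1 / e) / ln (ln (1 / e)))"
  by (intro conjI approx_part bigO_part) (use assms in auto)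

end
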